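(* Let $n=2^m$ with $m\geq 3$. If $C\subseteq X^n$ is a diameter perfect code with minimum distance $5$ (i.e., any two distinct words of $C$ are at Hamming distance at least $5$, and there exists $A\subseteq X^n$ with all pairwise distances at most $4$ and $|C|\cdot|A|=|X^n|$), then $|C| = 2^{n-1}/n$.
   Context: $X^n$ is the set of words of length $n$ over $\{*,0,1\}$ containing exactly one $*$ (equivalently, ternary words of length $n$ and weight $n-1$), so $|X^n|=n2^{n-1}$. Hamming distance is the number of coordinates in which two words differ. A code $C\subseteq X^n$ with minimum distance $d$ is diameter perfect if there is a set $A\subseteq X^n$ of diameter at most $d-1$ with $|C|\cdot|A|=|X^n|$. *)

theory Defs
  imports Complex_Main
begin

datatype sym = Star | Zero | One

definition Xn :: "nat \<Rightarrow> sym list set" where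
  "Xn n = {w. length w = n \<and> card {i. i < n \<and> w ! i = Star} = 1}"

definition hdist :: "sym list \<Rightarrow> sym list \<Rightarrow> nat" where
  "hdist u v = card {i. i < length u \<and> u ! i \<noteq> v ! i}"

definition min_dist_at_least :: "sym list set \<Rightarrow> nat \<Rightarrow> bool" where
  "min_dist_at_least C d \<longleftrightarrow> (\<forall>u\<in>C. \<forall>v\<in>C. u \<noteq> v \<longrightarrow> d \<le> hdist u v)"

definition diameter_at_most :: "sym list set \<Rightarrow> nat \<Rightarrow> bool" where
  "diameter_at_most A D \<longleftrightarrow> (\<forall>u\<in>A. \<forall>v\<in>A. hdist u v \<le> D)"

definition diameter_perfect :: "nat \<Rightarrow> sym list set \<Rightarrow> nat \<Rightarrow> bool" where
  "diameter_perfect n C d \<longleftrightarrow> C \<subseteq> Xn n \<and> min_dist_at_least C d \<and>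
     (\<exists>A. A \<subseteq> Xn n \<and> diameter_at_most A (d - 1) \<and> card C * card A = card (Xn n))"

end

theory Submission
  imports Defs
begin


definition st :: "sym list \<Rightarrow> nat" where
  "st w = (THE i. i < length w \<and> w ! i = Star)"
definition ones :: "sym list \<Rightarrow> nat set" where
  "ones w = {i. i < length w \<and> w ! i = One}"
definition sd :: "nat set \<Rightarrow> nat set \<Rightarrow> nat set" where
  "sd S T = (S - T) \<union> (T - S)"
definition DD :: "nat \<Rightarrow> nat set \<Rightarrow> nat \<Rightarrow> nat set \<Rightarrow> nat" where
  "DD p S q T = (if p = q then card (sd S T) else 2 + card (sd S T - {p, q}))"

lemma Xn_basic:
  assumes "w \<in> Xn n"
  shows "length w = n" "st w < n" "w ! st w = Star" "\<And>i. i < n \<Longrightarrow> w ! i = Star \<Longrightarrow> i = st w"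
proof -
  show l: "length w = n" using assms unfolding Xn_def by blast
  from assms have "card {i. i < n \<and> w ! i = Star} = 1" unfolding Xn_def by blast
  hence "\<exists>p. {i. i < n \<and> w ! i = Star} = {p}" by (simp add: card_1_singleton_iff)
  then obtain p where p: "{i. i < n \<and> w ! i = Star} = {p}" by blast
  hence pp: "p < n" "w ! p = Star" "\<And>i. i < n \<Longrightarrow> w ! i = Star \<Longrightarrow> i = p" by blast+
  have "st w = p" unfolding st_def l
  proof (rule the_equality)
    show "p < n \<and> w ! p = Star" using pp(1,2) by simp
  next
    fix i assume "i < n \<and> w ! i = Star" thus "i = p" using pp(3) by simp
  qed
  thus "st w < n" "w ! st w = Star" using pp(1,2) by simp_all
  show "\<And>i. i < n \<Longrightarrow> w ! i = Star \<Longrightarrow> i = st w" using pp(3) \<open>st w = p\<close> by simp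
qed

lemma Xn_nth:
  assumes "w \<in> Xn n" "i < n"
  shows "w ! i = (if i = st w then Star else if i \<in> ones w then One else Zero)"
proof (cases "w ! i")
  case Star
  hence "i = st w" using Xn_basic(4)[OF assms] by simp
  thus ?thesis using Star by simp
next
  case Zero
  hence "i \<noteq> st w" using Xn_basic(3)[OF assms(1)] by auto
  thus ?thesis using Zero by (simp add: ones_def)
next
  case One
  hence "i \<noteq> st w" using Xn_basic(3)[OF assms(1)] by auto
  moreover have "i \<in> ones w" using One assms(2) Xn_basic(1)[OF assms(1)] by (simp add: ones_def)
  ultimately show ?thesis using One by simp
qed

lemma ones_sub: "w \<in> Xn n \<Longrightarrow> ones w \<subseteq> {..<n} - {st w}"
proof
  fix i assume w: "w \<in> Xn n" and i: "i \<in> ones w"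
  hence "i < n" "w ! i = One" using Xn_basic(1)[OF w] by (auto simp: ones_def)
  moreover have "i \<noteq> st w" using Xn_basic(3)[OF w] \<open>w ! i = One\<close> by auto
  ultimately show "i \<in> {..<n} - {st w}" by simp
qed

lemma finite_ones[simp]: "finite (ones w)"
  by (simp add: ones_def)

lemma rep_inj:
  assumes "u \<in> Xn n" "v \<in> Xn n" "st u = st v" "ones u = ones v"
  shows "u = v"
proof (rule nth_equalityI)
  show "length u = length v" using Xn_basic(1)[OF assms(1)] Xn_basic(1)[OF assms(2)] by simp
  fix i assume "i < length u"
  hence "i < n" using Xn_basic(1)[OF assms(1)] by simp
  thus "u ! i = v ! i" using Xn_nth[OF assms(1)] Xn_nth[OF assms(2)] assms(3,4) by simp
qed

lemma st_notin_ones: "w \<in> Xn n \<Longrightarrow> st w \<notin> ones w"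
  using ones_sub by blast

lemma ones_lt: "w \<in> Xn n \<Longrightarrow> i \<in> ones w \<Longrightarrow> i < n"
  using ones_sub by blast

lemma hdist_DD:
  assumes "u \<in> Xn n" "v \<in> Xn n"
  shows "hdist u v = DD (st u) (ones u) (st v) (ones v)"
proof (cases "st u = st v")
  case True
  have "{i. i < length u \<and> u ! i \<noteq> v ! i} = sd (ones u) (ones v)"
  proof (rule set_eqI)
    fix i
    show "i \<in> {i. i < length u \<and> u ! i \<noteq> v ! i} \<longleftrightarrow> i \<in> sd (ones u) (ones v)"
    proof (cases "i < n")
      case True
      show ?thesis
        unfolding Xn_basic(1)[OF assms(1)] mem_Collect_eq Xn_nth[OF assms(1) True] Xn_nth[OF assms(2) True]
        using True \<open>st u = st v\<close> st_notin_ones[OF assms(1)] st_notin_ones[OF assms(2)]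
        by (auto simp: sd_def)
    next
      case False
      thus ?thesis using ones_lt[OF assms(1)] ones_lt[OF assms(2)] Xn_basic(1)[OF assms(1)]
        by (auto simp: sd_def)
    qed
  qed
  thus ?thesis using True by (simp add: hdist_def DD_def)
next
  case False
  have e: "{i. i < length u \<and> u ! i \<noteq> v ! i} = {st u, st v} \<union> (sd (ones u) (ones v) - {st u, st v})"
  proof (rule set_eqI)
    fix i
    show "i \<in> {i. i < length u \<and> u ! i \<noteq> v ! i} \<longleftrightarrow> i \<in> {st u, st v} \<union> (sd (ones u) (ones v) - {st u, st v})"
    proof (cases "i < n")
      case True
      show ?thesis
        unfolding Xn_basic(1)[OF assms(1)] mem_Collect_eq Xn_nth[OF assms(1) True] Xn_nth[OF assms(2) True]
        using True False st_notin_ones[OF assms(1)] st_notin_ones[OF assms(2)]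
        by (auto simp: sd_def)
    next
      case False
      thus ?thesis using ones_lt[OF assms(1)] ones_lt[OF assms(2)] Xn_basic(1)[OF assms(1)]
        Xn_basic(2)[OF assms(1)] Xn_basic(2)[OF assms(2)]
        by (auto simp: sd_def)
    qed
  qed
  have "finite (sd (ones u) (ones v))" by (simp add: sd_def)
  hence "card ({st u, st v} \<union> (sd (ones u) (ones v) - {st u, st v})) = 2 + card (sd (ones u) (ones v) - {st u, st v})"
    using False by (subst card_Un_disjoint) auto
  thus ?thesis using False e by (simp add: hdist_def DD_def)
qed

definition mkw :: "nat \<Rightarrow> nat \<Rightarrow> nat set \<Rightarrow> sym list" where
  "mkw n p S = map (\<lambda>i. if i = p then Star else if i \<in> S then One else Zero) [0..<n]"

lemma mkw_props:
  assumes "p < n" "S \<subseteq> {..<n} - {p}"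
  shows "mkw n p S \<in> Xn n" "st (mkw n p S) = p" "ones (mkw n p S) = S"
proof -
  have nth: "\<And>i. i < n \<Longrightarrow> mkw n p S ! i = (if i = p then Star else if i \<in> S then One else Zero)"
    by (simp add: mkw_def)
  have "{i. i < n \<and> mkw n p S ! i = Star} = {p}" using assms nth by (auto split: if_splits)
  moreover have "length (mkw n p S) = n" by (simp add: mkw_def)
  ultimately show m: "mkw n p S \<in> Xn n" unfolding Xn_def by simp
  show "st (mkw n p S) = p" using Xn_basic(4)[OF m, of p] assms by (simp add: mkw_def)
  have "length (mkw n p S) = n" by (simp add: mkw_def)
  thus "ones (mkw n p S) = S" using assms nth unfolding ones_def by (auto split: if_splits)
qed

definition R :: "nat \<Rightarrow> (nat \<times> nat set) set" where
  "R n = Sigma {..<n} (\<lambda>p. Pow ({..<n} - {p}))"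

lemma rep_image: "(\<lambda>w. (st w, ones w)) ` Xn n = R n"
proof
  show "(\<lambda>w. (st w, ones w)) ` Xn n \<subseteq> R n"
    using Xn_basic ones_sub by (fastforce simp: R_def)
  show "R n \<subseteq> (\<lambda>w. (st w, ones w)) ` Xn n"
  proof
    fix x assume "x \<in> R n"
    then obtain p S where x: "x = (p, S)" "p < n" "S \<subseteq> {..<n} - {p}" by (auto simp: R_def)
    show "x \<in> (\<lambda>w. (st w, ones w)) ` Xn n"
      using mkw_props[OF x(2,3)] x(1) by (metis (no_types, lifting) image_eqI)
  qed
qed

lemma rep_inj_on: "inj_on (\<lambda>w. (st w, ones w)) (Xn n)"
  by (auto intro: inj_onI rep_inj)

lemma card_R: "card (R n) = n * 2 ^ (n - 1)"
proof -
  have "card (R n) = (\<Sum>p<n. card (Pow ({..<n} - {p})))"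
    unfolding R_def by (subst card_SigmaI) auto
  also have "\<dots> = (\<Sum>p<n. 2 ^ (n - 1))"
    by (intro sum.cong refl) (simp add: card_Pow)
  finally show ?thesis by simp
qed

lemma card_Xn: "card (Xn n) = n * 2 ^ (n - 1)"
  using card_image[OF rep_inj_on[of n]] rep_image[of n] card_R by simp

lemma finite_Xn: "finite (Xn n)"
proof -
  have "finite (R n)" by (simp add: R_def)
  thus ?thesis using rep_image[of n] finite_imageD[OF _ rep_inj_on] by metis
qed



definition W :: "nat \<Rightarrow> nat \<Rightarrow> nat set \<Rightarrow> nat set set" where
  "W n p S = {v. v \<subseteq> {..<n} \<and> card (sd S v - {p}) \<le> 1}"

lemma sd_tri: "sd S T \<subseteq> sd S v \<union> sd T v"
  by (auto simp: sd_def)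

lemma finite_sd[simp]: "finite S \<Longrightarrow> finite T \<Longrightarrow> finite (sd S T)"
  by (simp add: sd_def)

lemma card_W:
  assumes "p < n" "S \<subseteq> {..<n} - {p}"
  shows "2 * n \<le> card (W n p S)"
proof -
  define g where "g = (\<lambda>(j::nat, b::bool). (sd S ({j} - {p}) - {p}) \<union> (if b then {p} else {}))"
  have sdg: "sd S (g (j, b)) - {p} = {j} - {p}" for j b
    using assms(2) by (auto simp: g_def sd_def)
  have gW: "g ` ({..<n} \<times> UNIV) \<subseteq> W n p S"
  proof
    fix v assume "v \<in> g ` ({..<n} \<times> UNIV)"
    then obtain j b where v: "v = g (j, b)" "j < n" by auto
    have "v \<subseteq> {..<n}" using v assms by (auto simp: g_def sd_def)
    moreover have "card ({j} - {p}) \<le> 1" by (cases "j = p") auto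
    hence "card (sd S v - {p}) \<le> 1" using v(1) sdg[of j b] by simp
    ultimately show "v \<in> W n p S" by (simp add: W_def)
  qed
  have inj: "inj_on g ({..<n} \<times> UNIV)"
  proof (rule inj_onI)
    fix x y assume x: "x \<in> {..<n} \<times> (UNIV::bool set)" and y: "y \<in> {..<n} \<times> (UNIV::bool set)" and e: "g x = g y"
    obtain j b where jb: "x = (j, b)" by (cases x)
    obtain j' b' where jb': "y = (j', b')" by (cases y)
    have "b = b'" using e assms(2) unfolding jb jb' g_def by (auto simp: sd_def split: if_splits)
    moreover have "{j} - {p} = {j'} - {p}" using sdg[of j b] sdg[of j' b'] e jb jb' by simp
    hence "j = j'" by (cases "j = p"; cases "j' = p") auto
    ultimately show "x = y" using jb jb' by simp
  qed
  have "card ({..<n} \<times> (UNIV::bool set)) = 2 * n" by (simp add: card_cartesian_product)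
  hence "card (g ` ({..<n} \<times> UNIV)) = 2 * n" using card_image[OF inj] by simp
  moreover have "finite (W n p S)" unfolding W_def by (rule finite_subset[of _ "Pow {..<n}"]) auto
  ultimately show ?thesis using card_mono[OF _ gW] by simp
qed

lemma W_close:
  assumes "v \<in> W n p S" "v \<in> W n q T" "p \<notin> S" "q \<notin> T" "finite S" "finite T"
  shows "DD p S q T \<le> 4"
proof -
  have "v \<subseteq> {..<n}" using assms(1) by (simp add: W_def)
  hence f: "finite v" using finite_subset by auto
  have c1: "card (sd S v - {p}) \<le> 1" "card (sd T v - {q}) \<le> 1" using assms(1,2) by (auto simp: W_def)
  have fin: "finite (sd S v - {p})" "finite (sd T v - {q})" using f assms(5,6) by auto
  show ?thesis
  proof (cases "p = q")
    case True
    have sub: "sd S T \<subseteq> (sd S v - {p}) \<union> (sd T v - {q})" using True assms(3,4) sd_tri[of S T v] by (auto simp: sd_def)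
    have "card (sd S T) \<le> card (sd S v - {p}) + card (sd T v - {q})"
      using card_mono[OF _ sub] card_Un_le[of "sd S v - {p}" "sd T v - {q}"] fin by simp
    thus ?thesis using True c1 by (simp add: DD_def)
  next
    case False
    have sub: "sd S T - {p, q} \<subseteq> (sd S v - {p}) \<union> (sd T v - {q})" using sd_tri[of S T v] by auto
    have "card (sd S T - {p, q}) \<le> card (sd S v - {p}) + card (sd T v - {q})"
      using card_mono[OF _ sub] card_Un_le[of "sd S v - {p}" "sd T v - {q}"] fin by simp
    thus ?thesis using False c1 by (simp add: DD_def)
  qed
qed

lemma code_bound:
  assumes FR: "F \<subseteq> R n"
    and dist: "\<And>p S q T. (p, S) \<in> F \<Longrightarrow> (q, T) \<in> F \<Longrightarrow> (p, S) \<noteq> (q, T) \<Longrightarrow> 5 \<le> DD p S q T"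
  shows "2 * n * card F \<le> 2 ^ n"
proof -
  have finF: "finite F" using FR by (rule finite_subset) (simp add: R_def)
  define Sg where "Sg = Sigma F (\<lambda>x. W n (fst x) (snd x))"
  have finW: "finite (W n p S)" for p S unfolding W_def by (rule finite_subset[of _ "Pow {..<n}"]) auto
  have "card Sg = (\<Sum>x\<in>F. card (W n (fst x) (snd x)))"
    unfolding Sg_def using finF finW by (subst card_SigmaI) auto
  moreover have "(\<Sum>x\<in>F. 2 * n) \<le> (\<Sum>x\<in>F. card (W n (fst x) (snd x)))"
  proof (rule sum_mono)
    fix x assume "x \<in> F"
    hence "x \<in> R n" using FR by blast
    hence "fst x < n" "snd x \<subseteq> {..<n} - {fst x}" by (cases x, auto simp: R_def)+
    thus "2 * n \<le> card (W n (fst x) (snd x))" by (rule card_W)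
  qed
  ultimately have c1: "2 * n * card F \<le> card Sg" by (simp add: mult.commute)
  have inj: "inj_on snd Sg"
  proof (rule inj_onI)
    fix a b assume a: "a \<in> Sg" and b: "b \<in> Sg" and e: "snd a = snd b"
    obtain x v where av: "a = (x, v)" by (cases a)
    obtain y v' where bv: "b = (y, v')" by (cases b)
    obtain p S where xp: "x = (p, S)" by (cases x)
    obtain q T where yq: "y = (q, T)" by (cases y)
    have m: "(p, S) \<in> F" "(q, T) \<in> F" "v \<in> W n p S" "v \<in> W n q T"
      using a b e av bv xp yq by (auto simp: Sg_def)
    have RR: "(p, S) \<in> R n" "(q, T) \<in> R n" using m(1,2) FR by blast+
    hence "p \<notin> S" "q \<notin> T" "S \<subseteq> {..<n}" "T \<subseteq> {..<n}" by (auto simp: R_def)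
    hence "p \<notin> S" "q \<notin> T" "finite S" "finite T" using finite_subset by auto
    hence "DD p S q T \<le> 4" using W_close[OF m(3,4)] by simp
    hence "(p, S) = (q, T)" using dist[OF m(1,2)] by fastforce
    thus "a = b" using av bv xp yq e by simp
  qed
  have "snd ` Sg \<subseteq> Pow {..<n}" by (auto simp: Sg_def W_def)
  hence "card (snd ` Sg) \<le> 2 ^ n" using card_mono[of "Pow {..<n}"] by (simp add: card_Pow)
  thus ?thesis using c1 card_image[OF inj] by simp
qed



lemma upd_Xn:
  assumes "u \<in> Xn n" "i < n" "u ! i = One"
  shows "u[i := Zero] \<in> Xn n"
proof -
  have l: "length u = n" using Xn_basic(1)[OF assms(1)] .
  have "{j. j < n \<and> u[i := Zero] ! j = Star} = {j. j < n \<and> u ! j = Star}"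
  proof (rule set_eqI)
    fix j show "j \<in> {j. j < n \<and> u[i := Zero] ! j = Star} \<longleftrightarrow> j \<in> {j. j < n \<and> u ! j = Star}"
      using assms(3) l by (cases "j = i") auto
  qed
  moreover have "card {j. j < n \<and> u ! j = Star} = 1" using assms(1) unfolding Xn_def by blast
  ultimately show ?thesis using l unfolding Xn_def by simp
qed

lemma ones_upd:
  assumes "i < length u"
  shows "ones (u[i := Zero]) = ones u - {i}"
proof (rule set_eqI)
  fix j show "j \<in> ones (u[i := Zero]) \<longleftrightarrow> j \<in> ones u - {i}"
    using assms by (cases "j = i") (auto simp: ones_def)
qed

lemma hd_h1:
  assumes "u ! i \<noteq> v ! i"
  shows "hdist (u[i := x]) v \<le> hdist u v"
proof -
  have "{j. j < length (u[i := x]) \<and> u[i := x] ! j \<noteq> v ! j} \<subseteq> {j. j < length u \<and> u ! j \<noteq> v ! j}"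
  proof
    fix j assume "j \<in> {j. j < length (u[i := x]) \<and> u[i := x] ! j \<noteq> v ! j}"
    thus "j \<in> {j. j < length u \<and> u ! j \<noteq> v ! j}" using assms by (cases "j = i") auto
  qed
  thus ?thesis unfolding hdist_def by (intro card_mono) auto
qed

lemma hd_h2:
  assumes "u ! i = One" "v ! i = One" "length u = length v"
  shows "hdist (u[i := Zero]) v = hdist u (v[i := Zero])"
proof -
  have "{j. j < length (u[i := Zero]) \<and> u[i := Zero] ! j \<noteq> v ! j} = {j. j < length u \<and> u ! j \<noteq> v[i := Zero] ! j}"
  proof (rule set_eqI)
    fix j show "j \<in> {j. j < length (u[i := Zero]) \<and> u[i := Zero] ! j \<noteq> v ! j} \<longleftrightarrow> j \<in> {j. j < length u \<and> u ! j \<noteq> v[i := Zero] ! j}"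
      using assms by (cases "j = i") auto
  qed
  thus ?thesis unfolding hdist_def by simp
qed

lemma hd_h4:
  assumes "length u = length v"
  shows "hdist (u[i := x]) (v[i := x]) \<le> hdist u v"
proof -
  have "{j. j < length (u[i := x]) \<and> u[i := x] ! j \<noteq> v[i := x] ! j} \<subseteq> {j. j < length u \<and> u ! j \<noteq> v ! j}"
  proof
    fix j assume "j \<in> {j. j < length (u[i := x]) \<and> u[i := x] ! j \<noteq> v[i := x] ! j}"
    thus "j \<in> {j. j < length u \<and> u ! j \<noteq> v ! j}" using assms by (cases "j = i") auto
  qed
  thus ?thesis unfolding hdist_def by (intro card_mono) auto
qed

lemma hd_sym:
  assumes "length u = length v"
  shows "hdist u v = hdist v u"
proof -
  have "{j. j < length u \<and> u ! j \<noteq> v ! j} = {j. j < length v \<and> v ! j \<noteq> u ! j}"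
    using assms by auto
  thus ?thesis unfolding hdist_def by simp
qed

definition wt :: "sym list set \<Rightarrow> nat" where
  "wt B = (\<Sum>w\<in>B. card (ones w))"

lemma compress_step:
  assumes BX: "B \<subseteq> Xn n" and dB: "diameter_at_most B 4"
    and w: "w \<in> B" "i < n" "w ! i = One" "w[i := Zero] \<notin> B"
  shows "\<exists>B'. B' \<subseteq> Xn n \<and> card B' = card B \<and> diameter_at_most B' 4 \<and> wt B' < wt B"
proof -
  define M where "M u \<longleftrightarrow> u ! i = One \<and> u[i := Zero] \<notin> B" for u
  define c where "c u = (if M u then u[i := Zero] else u)" for u
  have len: "\<And>u. u \<in> B \<Longrightarrow> length u = n" using BX Xn_basic(1) by blast
  have finB: "finite B" using BX finite_Xn finite_subset by blast
  have inj: "inj_on c B"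
  proof (rule inj_onI)
    fix a b assume a: "a \<in> B" and b: "b \<in> B" and e: "c a = c b"
    show "a = b"
    proof (cases "M a"; cases "M b")
      assume "M a" "M b"
      hence "a[i := Zero] = b[i := Zero]" "a ! i = One" "b ! i = One" using e by (auto simp: c_def M_def)
      hence "(a[i := Zero])[i := One] = (b[i := Zero])[i := One]" by simp
      thus "a = b" using \<open>a ! i = One\<close> \<open>b ! i = One\<close> by (metis list_update_id list_update_overwrite)
    next
      assume "M a" "\<not> M b"
      hence "a[i := Zero] = b" using e by (simp add: c_def)
      thus "a = b" using \<open>M a\<close> b by (simp add: M_def)
    next
      assume "\<not> M a" "M b"
      hence "a = b[i := Zero]" using e by (simp add: c_def)
      thus "a = b" using \<open>M b\<close> a by (simp add: M_def)
    next
      assume "\<not> M a" "\<not> M b"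
      thus "a = b" using e by (simp add: c_def)
    qed
  qed
  have cX: "c ` B \<subseteq> Xn n"
  proof
    fix x assume "x \<in> c ` B"
    then obtain u where u: "u \<in> B" "x = c u" by blast
    show "x \<in> Xn n"
    proof (cases "M u")
      case True thus ?thesis using u upd_Xn[of u n i] BX w(2) by (auto simp: c_def M_def)
    next
      case False thus ?thesis using u BX by (auto simp: c_def)
    qed
  qed
  have one_side: "hdist (a[i := Zero]) b \<le> 4" if a: "a \<in> B" "M a" and b: "b \<in> B" "\<not> M b" for a b
  proof (cases "b ! i = One")
    case True
    hence "b[i := Zero] \<in> B" using b(2) by (simp add: M_def)
    have "hdist (a[i := Zero]) b = hdist a (b[i := Zero])"
      using hd_h2[of a i b] a(2) True len[OF a(1)] len[OF b(1)] by (simp add: M_def)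
    also have "\<dots> \<le> 4" using dB a(1) \<open>b[i := Zero] \<in> B\<close> by (simp add: diameter_at_most_def)
    finally show ?thesis .
  next
    case False
    hence "a ! i \<noteq> b ! i" using a(2) by (simp add: M_def)
    hence "hdist (a[i := Zero]) b \<le> hdist a b" by (rule hd_h1)
    also have "\<dots> \<le> 4" using dB a(1) b(1) by (simp add: diameter_at_most_def)
    finally show ?thesis .
  qed
  have diam: "diameter_at_most (c ` B) 4"
    unfolding diameter_at_most_def
  proof (intro ballI)
    fix x y assume "x \<in> c ` B" "y \<in> c ` B"
    then obtain a b where ab: "a \<in> B" "b \<in> B" "x = c a" "y = c b" by blast
    show "hdist x y \<le> 4"
    proof (cases "M a"; cases "M b")
      assume "M a" "M b"
      hence "hdist x y \<le> hdist a b" using ab hd_h4[of a b i Zero] len by (simp add: c_def)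
      also have "\<dots> \<le> 4" using dB ab by (simp add: diameter_at_most_def)
      finally show ?thesis .
    next
      assume "M a" "\<not> M b"
      thus ?thesis using one_side[of a b] ab by (simp add: c_def)
    next
      assume "\<not> M a" "M b"
      hence "hdist y x \<le> 4" using one_side[of b a] ab by (simp add: c_def)
      moreover have "length x = length y" using ab len by (simp add: c_def)
      ultimately show ?thesis using hd_sym[of x y] by simp
    next
      assume "\<not> M a" "\<not> M b"
      thus ?thesis using dB ab by (simp add: c_def diameter_at_most_def)
    qed
  qed
  have "wt (c ` B) = (\<Sum>u\<in>B. card (ones (c u)))"
    unfolding wt_def using sum.reindex[OF inj] by simp
  also have "\<dots> < (\<Sum>u\<in>B. card (ones u))"
  proof (rule sum_strict_mono_ex1[OF finB])
    show "\<forall>u\<in>B. card (ones (c u)) \<le> card (ones u)"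
    proof
      fix u assume "u \<in> B"
      show "card (ones (c u)) \<le> card (ones u)"
      proof (cases "M u")
        case True
        have "i < length u" using len[OF \<open>u \<in> B\<close>] w(2) by simp
        thus ?thesis using True by (simp add: c_def ones_upd card_mono)
      qed (simp add: c_def)
    qed
    have Mw: "M w" using w by (simp add: M_def)
    have il: "i < length w" using len[OF w(1)] w(2) by simp
    have "i \<in> ones w" using il w(3) by (simp add: ones_def)
    hence "card (ones w - {i}) < card (ones w)" using card_Diff1_less[of "ones w" i] by simp
    hence "card (ones (c w)) < card (ones w)" using Mw il by (simp add: c_def ones_upd)
    thus "\<exists>u\<in>B. card (ones (c u)) < card (ones u)" using w(1) by blast
  qed
  finally have "wt (c ` B) < wt B" by (simp add: wt_def)
  moreover have "card (c ` B) = card B" using card_image[OF inj] .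
  ultimately show ?thesis using cX diam by blast
qed

lemma compress:
  assumes "A \<subseteq> Xn n" "diameter_at_most A 4"
  shows "\<exists>B. B \<subseteq> Xn n \<and> card B = card A \<and> diameter_at_most B 4 \<and>
             (\<forall>w\<in>B. \<forall>i<n. w ! i = One \<longrightarrow> w[i := Zero] \<in> B)"
proof -
  define P where "P B \<longleftrightarrow> B \<subseteq> Xn n \<and> card B = card A \<and> diameter_at_most B 4" for B
  have "P A" using assms by (simp add: P_def)
  then obtain B where B: "P B" and mn: "\<And>B'. P B' \<Longrightarrow> wt B \<le> wt B'"
    using ex_has_least_nat[of P A wt] by blast
  have "\<forall>w\<in>B. \<forall>i<n. w ! i = One \<longrightarrow> w[i := Zero] \<in> B"
  proof (intro ballI allI impI; rule ccontr)
    fix w i assume "w \<in> B" "i < n" "w ! i = One" "w[i := Zero] \<notin> B"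
    then obtain B' where "B' \<subseteq> Xn n" "card B' = card B" "diameter_at_most B' 4" "wt B' < wt B"
      using compress_step[of B n w i] B by (auto simp: P_def)
    hence "P B'" using B by (simp add: P_def)
    thus False using mn \<open>wt B' < wt B\<close> by fastforce
  qed
  thus ?thesis using B by (auto simp: P_def)
qed



lemma st_upd:
  assumes "w \<in> Xn n" "i < n" "w ! i = One"
  shows "st (w[i := Zero]) = st w"
proof -
  have w': "w[i := Zero] \<in> Xn n" using upd_Xn[OF assms] .
  have "st w \<noteq> i" using Xn_basic(3)[OF assms(1)] assms(3) by auto
  hence "w[i := Zero] ! st w = Star" using Xn_basic(3)[OF assms(1)] by simp
  thus ?thesis using Xn_basic(4)[OF w' Xn_basic(2)[OF assms(1)]] by simp
qed

lemma down_sets: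
  assumes BX: "B \<subseteq> Xn n" and dc: "\<forall>w\<in>B. \<forall>i<n. w ! i = One \<longrightarrow> w[i := Zero] \<in> B"
  shows "w \<in> B \<Longrightarrow> T \<subseteq> ones w \<Longrightarrow> \<exists>w'\<in>B. st w' = st w \<and> ones w' = T"
proof (induction "card (ones w - T)" arbitrary: w)
  case 0
  hence "ones w = T" by auto
  thus ?case using 0 by blast
next
  case (Suc k)
  then obtain i where i: "i \<in> ones w" "i \<notin> T" by (metis Diff_iff card_0_eq finite_Diff finite_ones ex_in_conv nat.distinct(1))
  have wX: "w \<in> Xn n" using Suc.prems BX by blast
  have iw: "i < n" "w ! i = One" using i(1) ones_lt[OF wX] by (auto simp: ones_def)
  define w1 where "w1 = w[i := Zero]"
  have w1B: "w1 \<in> B" using dc Suc.prems(1) iw by (simp add: w1_def)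
  have o1: "ones w1 = ones w - {i}" using iw Xn_basic(1)[OF wX] by (simp add: w1_def ones_upd)
  have s1: "st w1 = st w" using st_upd[OF wX iw] by (simp add: w1_def)
  have "ones w1 - T = (ones w - T) - {i}" using o1 by auto
  hence "card (ones w1 - T) = k" using Suc.hyps(2) i by simp
  moreover have "T \<subseteq> ones w1" using o1 Suc.prems(2) i(2) by auto
  ultimately obtain w' where "w' \<in> B" "st w' = st w1" "ones w' = T" using Suc.hyps(1) w1B by metis
  thus ?case using s1 by auto
qed

lemma to_F:
  assumes BX: "B \<subseteq> Xn n" and dB: "diameter_at_most B 4"
    and dc: "\<forall>w\<in>B. \<forall>i<n. w ! i = One \<longrightarrow> w[i := Zero] \<in> B"
  defines "F \<equiv> (\<lambda>w. (st w, ones w)) ` B"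
  shows "F \<subseteq> R n" "card F = card B"
    "\<And>p S T. (p, S) \<in> F \<Longrightarrow> T \<subseteq> S \<Longrightarrow> (p, T) \<in> F"
    "\<And>p S q T. (p, S) \<in> F \<Longrightarrow> (q, T) \<in> F \<Longrightarrow> DD p S q T \<le> 4"
proof -
  show "F \<subseteq> R n" using rep_image[of n] BX unfolding F_def by blast
  show "card F = card B" unfolding F_def using card_image inj_on_subset[OF rep_inj_on BX] by blast
  show "(p, T) \<in> F" if h: "(p, S) \<in> F" "T \<subseteq> S" for p S T
  proof -
    obtain w where w0: "w \<in> B" "(p, S) = (st w, ones w)" using h(1) unfolding F_def by blast
    hence w: "w \<in> B" "st w = p" "ones w = S" by auto
    then obtain w' where "w' \<in> B" "st w' = st w" "ones w' = T" using down_sets[OF BX dc w(1)] h(2) by blast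
    hence "(p, T) = (st w', ones w')" using w by simp
    thus ?thesis using \<open>w' \<in> B\<close> unfolding F_def by blast
  qed
  show "DD p S q T \<le> 4" if h: "(p, S) \<in> F" "(q, T) \<in> F" for p S q T
  proof -
    obtain u where u0: "u \<in> B" "(p, S) = (st u, ones u)" using h(1) unfolding F_def by blast
    hence u: "u \<in> B" "st u = p" "ones u = S" by auto
    obtain v where v0: "v \<in> B" "(q, T) = (st v, ones v)" using h(2) unfolding F_def by blast
    hence v: "v \<in> B" "st v = q" "ones v = T" by auto
    have "hdist u v \<le> 4" using dB u(1) v(1) by (simp add: diameter_at_most_def)
    moreover have "u \<in> Xn n" "v \<in> Xn n" using u(1) v(1) BX by blast+
    ultimately show ?thesis using hdist_DD[of u n v] u v by simp
  qed
qed



locale AC =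
  fixes n :: nat and F :: "(nat \<times> nat set) set"
  assumes n8: "8 \<le> n"
    and F1: "F \<subseteq> R n"
    and F2: "\<And>p S T. (p, S) \<in> F \<Longrightarrow> T \<subseteq> S \<Longrightarrow> (p, T) \<in> F"
    and F3: "\<And>p S q T. (p, S) \<in> F \<Longrightarrow> (q, T) \<in> F \<Longrightarrow> DD p S q T \<le> 4"
begin

lemma inF: assumes "(q, T) \<in> F" shows "q < n" "T \<subseteq> {..<n} - {q}" "finite T"
proof -
  have "(q, T) \<in> R n" using assms F1 by blast
  thus "q < n" "T \<subseteq> {..<n} - {q}" by (auto simp: R_def)
  thus "finite T" using finite_subset by blast
qed

lemma finF: "finite F"
  using F1 by (rule finite_subset) (simp add: R_def)

definition G1 where "G1 = {x \<in> F. card (snd x) \<le> 1}"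

lemma card_G1: "card G1 \<le> n * n"
proof -
  define f where "f = (\<lambda>(q::nat, c::nat). (q, if c = q then {} else {c}))"
  have "G1 \<subseteq> f ` ({..<n} \<times> {..<n})"
  proof
    fix x assume x: "x \<in> G1"
    obtain q T where xq: "x = (q, T)" by (cases x)
    have qT: "(q, T) \<in> F" "card T \<le> 1" using x xq by (auto simp: G1_def)
    note i = inF[OF qT(1)]
    show "x \<in> f ` ({..<n} \<times> {..<n})"
    proof (cases "T = {}")
      case True
      hence "x = f (q, q)" using xq by (simp add: f_def)
      thus ?thesis using i(1) by blast
    next
      case False
      then obtain c where "T = {c}" using qT(2) i(3)
        by (metis One_nat_def card_0_eq card_1_singleton_iff le_SucE le_zero_eq)
      moreover have "c < n" "c \<noteq> q" using i(2) \<open>T = {c}\<close> by auto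
      ultimately have "x = f (q, c)" using xq by (simp add: f_def)
      thus ?thesis using \<open>c < n\<close> i(1) by blast
    qed
  qed
  hence "card G1 \<le> card (f ` ({..<n} \<times> {..<n}))" by (intro card_mono) auto
  also have "\<dots> \<le> card ({..<n} \<times> {..<n})" by (rule card_image_le) simp
  finally show ?thesis by (simp add: card_cartesian_product)
qed

lemma two_sub:
  assumes "finite T" "2 \<le> card T"
  obtains c d where "c \<in> T" "d \<in> T" "c \<noteq> d"
proof -
  obtain U where "U \<subseteq> T" "card U = 2" using obtain_subset_with_card_n[OF assms(2)] by metis
  then obtain c d where "U = {c, d}" "c \<noteq> d" by (auto simp: card_2_iff)
  thus ?thesis using that \<open>U \<subseteq> T\<close> by auto
qed

lemma caseI:
  assumes pS: "(p, S) \<in> F" and c3: "3 \<le> card S"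
  shows "card F < 2 * n * n"
proof -
  obtain S0 where S0: "S0 \<subseteq> S" "card S0 = 3" using obtain_subset_with_card_n[OF c3] by metis
  have pS0: "(p, S0) \<in> F" using F2[OF pS S0(1)] .
  note i0 = inF[OF pS0]
  obtain x y z where xyz: "S0 = {x, y, z}" "x \<noteq> y" "y \<noteq> z" "x \<noteq> z" using S0(2) by (auto simp: card_3_iff)
  have pn: "p \<notin> S0" using i0(2) by auto
  have fS0: "finite S0" using xyz by simp
  have Ia: "card (T - S0) \<le> 1" if pT: "(p, T) \<in> F" for T
  proof (rule ccontr)
    assume "\<not> card (T - S0) \<le> 1"
    hence "2 \<le> card (T - S0)" by simp
    moreover have "finite (T - S0)" using inF(3)[OF pT] by simp
    ultimately obtain c d where cd: "c \<in> T - S0" "d \<in> T - S0" "c \<noteq> d" using two_sub by metis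
    have "(p, {c, d}) \<in> F" using F2[OF pT] cd by auto
    hence "DD p {c, d} p S0 \<le> 4" using F3 pS0 by blast
    moreover have "sd {c, d} S0 = {c, d, x, y, z}" using cd xyz by (auto simp: sd_def)
    moreover have "card {c, d, x, y, z} = 5" using cd xyz by auto
    ultimately show False by (simp add: DD_def)
  qed
  have Ib: "q \<in> S0" if qT: "(q, T) \<in> F" "q \<noteq> p" for q T
  proof (rule ccontr)
    assume qn: "q \<notin> S0"
    have "(q, {}) \<in> F" using F2[OF qT(1)] by simp
    hence "DD q {} p S0 \<le> 4" using F3 pS0 by blast
    moreover have "sd {} S0 - {q, p} = S0" using qn pn by (auto simp: sd_def)
    ultimately show False using qT(2) S0(2) by (simp add: DD_def)
  qed
  have Ic: "T \<subseteq> S0 \<union> {p}" if qT: "(q, T) \<in> F" "q \<noteq> p" for q T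
  proof
    fix c assume cT: "c \<in> T"
    show "c \<in> S0 \<union> {p}"
    proof (rule ccontr)
      assume cn: "c \<notin> S0 \<union> {p}"
      have cq: "c \<noteq> q" using inF(2)[OF qT(1)] cT by auto
      have qS: "q \<in> S0" using Ib[OF qT] .
      have "(q, {c}) \<in> F" using F2[OF qT(1)] cT by simp
      hence "DD q {c} p S0 \<le> 4" using F3 pS0 by blast
      moreover have "sd {c} S0 - {q, p} = insert c (S0 - {q})" using cn cq pn by (auto simp: sd_def)
      moreover have "card (S0 - {q}) = 2" using qS S0(2) fS0 by simp
      moreover have "c \<notin> S0 - {q}" using cn by simp
      ultimately show False using qT(2) fS0 by (simp add: DD_def)
    qed
  qed
  define Q where "Q = {T. T \<subseteq> {..<n} \<and> card (T - S0) \<le> 1}"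
  define E where "E = insert {} ((\<lambda>c. {c}) ` {..<n})"
  have "F \<subseteq> ({p} \<times> Q) \<union> (S0 \<times> Pow (S0 \<union> {p}))"
  proof
    fix w assume w: "w \<in> F"
    obtain q T where wq: "w = (q, T)" by (cases w)
    show "w \<in> ({p} \<times> Q) \<union> (S0 \<times> Pow (S0 \<union> {p}))"
    proof (cases "q = p")
      case True
      thus ?thesis using Ia[of T] w wq inF(2)[of q T] by (auto simp: Q_def)
    next
      case False
      thus ?thesis using Ib[of q T] Ic[of q T] w wq by auto
    qed
  qed
  moreover have finQ: "finite Q" by (rule finite_subset[of _ "Pow {..<n}"]) (auto simp: Q_def)
  ultimately have "card F \<le> card (({p} \<times> Q) \<union> (S0 \<times> Pow (S0 \<union> {p})))"
    using fS0 by (intro card_mono) auto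
  also have "\<dots> \<le> card ({p} \<times> Q) + card (S0 \<times> Pow (S0 \<union> {p}))" by (rule card_Un_le)
  also have "card (S0 \<times> Pow (S0 \<union> {p})) = 3 * 16"
  proof -
    have "card (S0 \<union> {p}) = 4" using pn fS0 S0(2) by simp
    thus ?thesis using S0(2) fS0 by (simp add: card_cartesian_product card_Pow)
  qed
  also have "card ({p} \<times> Q) \<le> 8 * (n + 1)"
  proof -
    have "Q \<subseteq> (\<lambda>(U, V). U \<union> V) ` (Pow S0 \<times> E)"
    proof
      fix T assume T: "T \<in> Q"
      have "T \<subseteq> {..<n}" using T by (simp add: Q_def)
      hence ft: "finite (T - S0)" using finite_subset by blast
      have "T - S0 \<in> E"
      proof (cases "T - S0 = {}")
        case True thus ?thesis by (simp add: E_def)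
      next
        case False
        have "card (T - S0) \<le> 1" using T by (simp add: Q_def)
        hence "card (T - S0) = 1" using False ft by (simp add: le_Suc_eq)
        then obtain c where "T - S0 = {c}" by (auto simp: card_1_singleton_iff)
        moreover have "c < n" using T \<open>T - S0 = {c}\<close> by (auto simp: Q_def)
        ultimately show ?thesis by (simp add: E_def)
      qed
      moreover have "T = (T \<inter> S0) \<union> (T - S0)" by auto
      moreover have "(T \<inter> S0, T - S0) \<in> Pow S0 \<times> E" using \<open>T - S0 \<in> E\<close> by simp
      ultimately show "T \<in> (\<lambda>(U, V). U \<union> V) ` (Pow S0 \<times> E)" by (metis (no_types, lifting) case_prod_conv image_eqI)
    qed
    moreover have "finite E" by (simp add: E_def)
    ultimately have "card Q \<le> card ((\<lambda>(U, V). U \<union> V) ` (Pow S0 \<times> E))"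
      using fS0 by (intro card_mono) auto
    also have "\<dots> \<le> card (Pow S0 \<times> E)" by (rule card_image_le) (simp add: E_def fS0)
    also have "\<dots> = 8 * card E" using S0(2) fS0 by (simp add: card_cartesian_product card_Pow)
    also have "card E \<le> n + 1"
    proof -
      have "card E \<le> Suc (card ((\<lambda>c. {c}) ` {..<n}))" unfolding E_def by (simp add: card_insert_if)
      also have "card ((\<lambda>c. {c}) ` {..<n}) \<le> n" using card_image_le[of "{..<n}" "\<lambda>c. {c}"] by simp
      finally show ?thesis by simp
    qed
    finally show ?thesis by (simp add: card_cartesian_product)
  qed
  finally have "card F \<le> 8 * (n + 1) + 48" by simp
  moreover have "8 * (n + 1) + 48 < 2 * n * n"
  proof -
    obtain k where "n = k + 8" using n8 by (metis add.commute le_Suc_ex)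
    thus ?thesis by (simp add: algebra_simps)
  qed
  ultimately show ?thesis by simp
qed

lemma card_ins_le: "card (insert x A) \<le> Suc (card A)"
  by (cases "finite A") (auto simp: card_insert_if)

lemma IIa:
  assumes pab: "(p, {a, b}) \<in> F" and ab: "a \<noteq> b" "p \<noteq> a" "p \<noteq> b"
    and qT: "(q, T) \<in> F" and qn: "q \<noteq> p" "q \<noteq> a" "q \<noteq> b"
  shows "T \<subseteq> {a, b, p}"
proof
  fix c assume cT: "c \<in> T"
  show "c \<in> {a, b, p}"
  proof (rule ccontr)
    assume cn: "c \<notin> {a, b, p}"
    have cq: "c \<noteq> q" using inF(2)[OF qT] cT by auto
    have "(q, {c}) \<in> F" using F2[OF qT] cT by simp
    hence "DD q {c} p {a, b} \<le> 4" using F3 pab by blast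
    moreover have "sd {c} {a, b} - {q, p} = {c, a, b}" using cn cq qn ab by (auto simp: sd_def)
    moreover have "card {c, a, b} = 3" using cn ab by simp
    ultimately show False using qn by (simp add: DD_def)
  qed
qed

lemma IIb:
  assumes pab: "(p, {r, s}) \<in> F" and ab: "r \<noteq> s" "p \<noteq> r" "p \<noteq> s"
    and rT: "(r, T) \<in> F"
  shows "card (T - {p, s}) \<le> 1"
proof (rule ccontr)
  assume "\<not> card (T - {p, s}) \<le> 1"
  hence "2 \<le> card (T - {p, s})" by simp
  moreover have "finite (T - {p, s})" using inF(3)[OF rT] by simp
  ultimately obtain c d where cd: "c \<in> T - {p, s}" "d \<in> T - {p, s}" "c \<noteq> d" using two_sub by metis
  have cr: "c \<noteq> r" "d \<noteq> r" using inF(2)[OF rT] cd by auto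
  have "(r, {c, d}) \<in> F" using F2[OF rT] cd by auto
  hence "DD r {c, d} p {r, s} \<le> 4" using F3 pab by blast
  moreover have "sd {c, d} {r, s} - {r, p} = {s, c, d}" using cd cr ab by (auto simp: sd_def)
  moreover have "card {s, c, d} = 3" using cd by auto
  ultimately show False using ab by (simp add: DD_def)
qed

lemma shape2:
  assumes "card T = 2" "T \<subseteq> {..<n} - {r}" "card (T - {p, s}) \<le> 1"
  shows "T \<in> insert {p, s} ((\<lambda>c. {p, c}) ` ({..<n} - {r, p, s}) \<union> (\<lambda>c. {s, c}) ` ({..<n} - {r, p, s}))"
proof -
  obtain x y where xy: "T = {x, y}" "x \<noteq> y" using assms(1) by (auto simp: card_2_iff)
  have xyn: "x < n" "y < n" "x \<noteq> r" "y \<noteq> r" using assms(2) xy by auto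
  show ?thesis
  proof (cases "x \<in> {p, s}")
    case xin: True
    show ?thesis
    proof (cases "y \<in> {p, s}")
      case True
      hence "T = {p, s}" using xin xy by auto
      thus ?thesis by simp
    next
      case False
      hence "y \<in> {..<n} - {r, p, s}" using xyn by auto
      moreover have "T = {p, y} \<or> T = {s, y}" using xin xy by auto
      ultimately show ?thesis by blast
    qed
  next
    case xout: False
    have "y \<in> {p, s}"
    proof (rule ccontr)
      assume "y \<notin> {p, s}"
      hence "T - {p, s} = {x, y}" using xout xy by auto
      thus False using assms(3) xy by simp
    qed
    moreover have "x \<in> {..<n} - {r, p, s}" using xyn xout by auto
    moreover have "T = {p, x} \<or> T = {s, x}" using \<open>y \<in> {p, s}\<close> xy by auto
    ultimately show ?thesis by blast
  qed
qed

lemma card_shape2: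
  assumes "r < n" "p < n" "s < n" "r \<noteq> p" "r \<noteq> s" "p \<noteq> s"
  shows "card (insert {p, s} ((\<lambda>c. {p, c}) ` ({..<n} - {r, p, s}) \<union> (\<lambda>c. {s, c}) ` ({..<n} - {r, p, s}))) \<le> 1 + 2 * (n - 3)"
proof -
  have cR: "card ({..<n} - {r, p, s}) = n - 3"
    using assms by (subst card_Diff_subset) auto
  have "card (insert {p, s} ((\<lambda>c. {p, c}) ` ({..<n} - {r, p, s}) \<union> (\<lambda>c. {s, c}) ` ({..<n} - {r, p, s})))
     \<le> Suc (card ((\<lambda>c. {p, c}) ` ({..<n} - {r, p, s}) \<union> (\<lambda>c. {s, c}) ` ({..<n} - {r, p, s})))" by (rule card_ins_le)
  also have "card ((\<lambda>c. {p, c}) ` ({..<n} - {r, p, s}) \<union> (\<lambda>c. {s, c}) ` ({..<n} - {r, p, s}))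
     \<le> card ((\<lambda>c. {p, c}) ` ({..<n} - {r, p, s})) + card ((\<lambda>c. {s, c}) ` ({..<n} - {r, p, s}))" by (rule card_Un_le)
  also have "card ((\<lambda>c. {p, c}) ` ({..<n} - {r, p, s})) \<le> n - 3" using card_image_le[of "{..<n} - {r, p, s}" "\<lambda>c. {p, c}"] cR by simp
  also have "card ((\<lambda>c. {s, c}) ` ({..<n} - {r, p, s})) \<le> n - 3" using card_image_le[of "{..<n} - {r, p, s}" "\<lambda>c. {s, c}"] cR by simp
  finally show ?thesis by simp
qed

lemma sub3_2:
  assumes "T \<subseteq> {a, b, p}" "card T = 2"
  shows "T \<in> {{a, b}, {a, p}, {b, p}}"
proof -
  obtain x y where xy: "T = {x, y}" "x \<noteq> y" using assms(2) by (auto simp: card_2_iff)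
  thus ?thesis using assms(1) by auto
qed

lemma card_Un5: "card (X1 \<union> X2 \<union> X3 \<union> X4 \<union> X5) \<le> card X1 + card X2 + card X3 + card X4 + card X5"
  using card_Un_le[of "X1 \<union> X2 \<union> X3 \<union> X4" X5] card_Un_le[of "X1 \<union> X2 \<union> X3" X4]
    card_Un_le[of "X1 \<union> X2" X3] card_Un_le[of X1 X2] by linarith

lemma caseII:
  assumes le2: "\<And>q T. (q, T) \<in> F \<Longrightarrow> card T \<le> 2"
    and pab: "(p, {a, b}) \<in> F" and ab: "a \<noteq> b"
  shows "card F < 2 * n * n"
proof -
  note ip = inF[OF pab]
  have abp: "p \<noteq> a" "p \<noteq> b" "a < n" "b < n" "p < n" using ip by auto
  have pba: "(p, {b, a}) \<in> F" using pab by (simp add: insert_commute)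
  define P2 where "P2 = {T. T \<subseteq> {..<n} - {p} \<and> card T = 2}"
  define Ka where "Ka = insert {p, b} ((\<lambda>c. {p, c}) ` ({..<n} - {a, p, b}) \<union> (\<lambda>c. {b, c}) ` ({..<n} - {a, p, b}))"
  define Kb where "Kb = insert {p, a} ((\<lambda>c. {p, c}) ` ({..<n} - {b, p, a}) \<union> (\<lambda>c. {a, c}) ` ({..<n} - {b, p, a}))"
  define Oth where "Oth = ({..<n} - {p, a, b}) \<times> {{a, b}, {a, p}, {b, p}}"
  have sub: "F \<subseteq> G1 \<union> ({p} \<times> P2) \<union> Oth \<union> ({a} \<times> Ka) \<union> ({b} \<times> Kb)"
  proof
    fix w assume w: "w \<in> F"
    obtain q T where wq: "w = (q, T)" by (cases w)
    have qT: "(q, T) \<in> F" using w wq by simp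
    note iq = inF[OF qT]
    show "w \<in> G1 \<union> ({p} \<times> P2) \<union> Oth \<union> ({a} \<times> Ka) \<union> ({b} \<times> Kb)"
    proof (cases "card T \<le> 1")
      case True hence "w \<in> G1" using w wq by (simp add: G1_def)
      thus ?thesis by blast
    next
      case False
      hence c2: "card T = 2" using le2[OF qT] by simp
      show ?thesis
      proof (cases "q = p")
        case True hence "w \<in> {p} \<times> P2" using wq iq c2 by (simp add: P2_def)
        thus ?thesis by blast
      next
        case qp: False
        show ?thesis
        proof (cases "q = a")
          case True
          have "card (T - {p, b}) \<le> 1" using IIb[OF pab ab abp(1,2)] qT True by simp
          hence "T \<in> Ka" unfolding Ka_def using iq True by (intro shape2[OF c2]) auto
          hence "w \<in> {a} \<times> Ka" using wq True by simp
          thus ?thesis by blast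
        next
          case qa: False
          show ?thesis
          proof (cases "q = b")
            case True
            have "card (T - {p, a}) \<le> 1" using IIb[OF pba _ abp(2,1)] ab qT True by simp
            hence "T \<in> Kb" unfolding Kb_def using iq True by (intro shape2[OF c2]) auto
            hence "w \<in> {b} \<times> Kb" using wq True by simp
            thus ?thesis by blast
          next
            case qb: False
            have "T \<subseteq> {a, b, p}" using IIa[OF pab ab abp(1,2) qT qp qa qb] .
            hence "T \<in> {{a, b}, {a, p}, {b, p}}" using c2 by (rule sub3_2)
            moreover have "q \<in> {..<n} - {p, a, b}" using iq qp qa qb by simp
            ultimately have "w \<in> Oth" using wq by (simp add: Oth_def)
            thus ?thesis by blast
          qed
        qed
      qed
    qed
  qed
  have fin: "finite (G1 \<union> ({p} \<times> P2) \<union> Oth \<union> ({a} \<times> Ka) \<union> ({b} \<times> Kb))"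
  proof -
    have "finite G1" using finF by (simp add: G1_def)
    moreover have "finite P2" by (rule finite_subset[of _ "Pow {..<n}"]) (auto simp: P2_def)
    ultimately show ?thesis by (simp add: Oth_def Ka_def Kb_def)
  qed
  have "card F \<le> card (G1 \<union> ({p} \<times> P2) \<union> Oth \<union> ({a} \<times> Ka) \<union> ({b} \<times> Kb))"
    using card_mono[OF fin sub] .
  also have "\<dots> \<le> card G1 + card ({p} \<times> P2) + card Oth + card ({a} \<times> Ka) + card ({b} \<times> Kb)"
    by (rule card_Un5)
  also have "card ({p} \<times> P2) = (n - 1) choose 2"
  proof -
    have "card ({..<n} - {p}) = n - 1" using abp by simp
    thus ?thesis unfolding P2_def by (simp add: card_cartesian_product n_subsets)
  qed
  also have "card Oth \<le> (n - 3) * 3"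
  proof -
    have "card ({..<n} - {p, a, b}) = n - 3" using abp ab by (subst card_Diff_subset) auto
    moreover have "card {{a, b}, {a, p}, {b, p}} \<le> 3"
      using card_ins_le[of "{a, b}" "{{a, p}, {b, p}}"] card_ins_le[of "{a, p}" "{{b, p}}"] by simp
    ultimately show ?thesis unfolding Oth_def by (simp add: card_cartesian_product)
  qed
  also have "card ({a} \<times> Ka) \<le> 1 + 2 * (n - 3)"
  proof -
    have "card Ka \<le> 1 + 2 * (n - 3)" unfolding Ka_def using abp ab by (intro card_shape2) auto
    thus ?thesis by (simp add: card_cartesian_product)
  qed
  also have "card ({b} \<times> Kb) \<le> 1 + 2 * (n - 3)"
  proof -
    have "card Kb \<le> 1 + 2 * (n - 3)" unfolding Kb_def using abp ab by (intro card_shape2) auto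
    thus ?thesis by (simp add: card_cartesian_product)
  qed
  finally have tot: "card F \<le> card G1 + ((n - 1) choose 2) + (n - 3) * 3 + (1 + 2 * (n - 3)) + (1 + 2 * (n - 3))" by simp
  have e: "(n - 1) choose 2 = (n - 1) * (n - 2) div 2" using choose_two[of "n - 1"] by (simp add: diff_diff_left numeral_2_eq_2)
  have "2 * ((n - 1) choose 2) \<le> (n - 1) * (n - 2)"
    using div_times_less_eq_dividend[of "(n - 1) * (n - 2)" 2] e by (simp add: mult.commute)
  moreover have "card G1 \<le> n * n" by (rule card_G1)
  moreover obtain k where "n = k + 8" using n8 by (metis add.commute le_Suc_ex)
  ultimately show ?thesis using tot by (simp add: algebra_simps)
qed

lemma anticode: "card F < 2 * n * n"
proof (cases "\<exists>p S. (p, S) \<in> F \<and> 3 \<le> card S")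
  case True
  then obtain p S where "(p, S) \<in> F" "3 \<le> card S" by blast
  thus ?thesis by (rule caseI)
next
  case False
  hence le2: "\<And>q T. (q, T) \<in> F \<Longrightarrow> card T \<le> 2" by fastforce
  show ?thesis
  proof (cases "\<exists>p S. (p, S) \<in> F \<and> card S = 2")
    case True
    then obtain p S where pS: "(p, S) \<in> F" "card S = 2" by blast
    then obtain a b where "S = {a, b}" "a \<noteq> b" by (auto simp: card_2_iff)
    hence "(p, {a, b}) \<in> F" "a \<noteq> b" using pS by auto
    thus ?thesis using caseII[of p a b] le2 by blast
  next
    case False
    hence "F \<subseteq> G1" using le2 unfolding G1_def by (fastforce simp: le_Suc_eq)
    hence "card F \<le> card G1" using finF by (intro card_mono) (auto simp: G1_def)
    also have "\<dots> \<le> n * n" by (rule card_G1)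
    finally have "card F \<le> n * n" .
    moreover have "0 < n * n" using n8 by simp
    ultimately show ?thesis by linarith
  qed
qed

end



lemma pow2_factor: "(x::nat) * y = 2 ^ K \<Longrightarrow> \<exists>i. x = 2 ^ i"
proof (induction K arbitrary: x y)
  case 0
  hence "x = 1" by simp
  thus ?case by (metis power_0)
next
  case (Suc K)
  hence "even (x * y)" by simp
  hence "even x \<or> even y" by simp
  thus ?case
  proof
    assume "even x"
    then obtain x' where x': "x = 2 * x'" by blast
    hence "x' * y = 2 ^ K" using Suc.prems by simp
    then obtain i where "x' = 2 ^ i" using Suc.IH by blast
    thus ?case using x' by (metis power_Suc)
  next
    assume "even y"
    then obtain y' where y': "y = 2 * y'" by blast
    hence "x * y' = 2 ^ K" using Suc.prems by simp
    thus ?case using Suc.IH by blast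
  qed
qed

theorem theorem2:
  fixes m n :: nat and C :: "sym list set"
  assumes "n = 2 ^ m" and "m \<ge> 3"
    and "diameter_perfect n C 5"
  shows "real (card C) = 2 ^ (n - 1) / real n"
proof -
  have n8: "8 \<le> n"
  proof -
    have "(2::nat) ^ 3 \<le> 2 ^ m" using assms(2) by (intro power_increasing) auto
    thus ?thesis using assms(1) by simp
  qed
  from assms(3) obtain A where CX: "C \<subseteq> Xn n" and md: "min_dist_at_least C 5"
    and AX: "A \<subseteq> Xn n" and dA: "diameter_at_most A 4" and prod: "card C * card A = card (Xn n)"
    unfolding diameter_perfect_def by auto
  define FC where "FC = (\<lambda>w. (st w, ones w)) ` C"
  have FCR: "FC \<subseteq> R n" using rep_image[of n] CX unfolding FC_def by blast
  have cFC: "card FC = card C" unfolding FC_def using card_image inj_on_subset[OF rep_inj_on CX] by blast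
  have distFC: "5 \<le> DD p S q T" if h: "(p, S) \<in> FC" "(q, T) \<in> FC" "(p, S) \<noteq> (q, T)" for p S q T
  proof -
    obtain u where u0: "u \<in> C" "(p, S) = (st u, ones u)" using h(1) unfolding FC_def by blast
    obtain v where v0: "v \<in> C" "(q, T) = (st v, ones v)" using h(2) unfolding FC_def by blast
    have "u \<noteq> v" using u0 v0 h(3) by auto
    hence "5 \<le> hdist u v" using md u0(1) v0(1) unfolding min_dist_at_least_def by blast
    moreover have "u \<in> Xn n" "v \<in> Xn n" using u0(1) v0(1) CX by blast+
    ultimately show ?thesis using hdist_DD[of u n v] u0 v0 by simp
  qed
  have cb: "2 * n * card C \<le> 2 ^ n" using code_bound[OF FCR distFC] cFC by simp
  obtain B where BX: "B \<subseteq> Xn n" and cB: "card B = card A" and dB: "diameter_at_most B 4"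
    and dc: "\<forall>w\<in>B. \<forall>i<n. w ! i = One \<longrightarrow> w[i := Zero] \<in> B"
    using compress[OF AX dA] by blast
  define F where "F = (\<lambda>w. (st w, ones w)) ` B"
  have "AC n F"
  proof
    show "8 \<le> n" by (rule n8)
    show "F \<subseteq> R n" unfolding F_def by (rule to_F(1)[OF BX dB dc])
    show "(p, T) \<in> F" if "(p, S) \<in> F" "T \<subseteq> S" for p S T
      using to_F(3)[OF BX dB dc] that unfolding F_def by blast
    show "DD p S q T \<le> 4" if "(p, S) \<in> F" "(q, T) \<in> F" for p S q T
      using to_F(4)[OF BX dB dc] that unfolding F_def by blast
  qed
  hence "card F < 2 * n * n" by (rule AC.anticode)
  moreover have "card F = card B" unfolding F_def by (rule to_F(2)[OF BX dB dc])
  ultimately have ab: "card A < 2 * n * n" using cB by simp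
  have n1: "n = Suc (n - 1)" using n8 by simp
  have "card C * card A = 2 ^ m * 2 ^ (n - 1)" using prod card_Xn[of n] assms(1) by simp
  hence "card C * card A = 2 ^ (m + (n - 1))" by (simp only: power_add)
  moreover obtain c where c: "card C = 2 ^ c" using pow2_factor[OF calculation] by blast
  moreover obtain a where a: "card A = 2 ^ a" using pow2_factor[of "card A" "card C"] calculation(1) by (metis mult.commute)
  ultimately have "2 ^ (c + a) = (2::nat) ^ (m + (n - 1))" by (simp add: power_add)
  hence ca: "c + a = m + (n - 1)" by (simp add: power_inject_exp)
  have h1: "(2::nat) ^ (Suc (m + c)) \<le> 2 ^ n" using cb c assms(1) by (simp add: power_add)
  have c1: "Suc (m + c) \<le> n" using power_le_imp_le_exp[OF _ h1] by simp
  have h2: "(2::nat) ^ a < 2 ^ (Suc (m + m))" using ab a assms(1) by (simp add: power_add)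
  have a1: "a < Suc (m + m)" using power_less_imp_less_exp[OF _ h2] by simp
  have cv: "c + m = n - 1" using ca c1 a1 by linarith
  have "(2::real) ^ (n - 1) = 2 ^ c * 2 ^ m" using cv by (metis power_add)
  moreover have "real n = 2 ^ m" using assms(1) by simp
  ultimately show ?thesis using c by simp
qed


end
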